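(* Let $N$ be a finite nonempty set, $p\notin N$ and $N'=N\cup\{p\}$. Let $\mathscr{C}^1\neq\mathscr{C}^2$ be minimal balanced collections on $N$ with balancing weights $\lambda^{\mathscr{C}^1},\lambda^{\mathscr{C}^2}$, and let $\mathscr{C}=\mathscr{C}^1\cup\mathscr{C}^2=\{S_1,\dots,S_k\}$. Assume that the $n\times k$ matrix $A^{\mathscr{C}}$ with columns $\mathbf{1}^{S_1},\dots,\mathbf{1}^{S_k}$ has rank $k-1$. Define $\mu,\nu\in\mathbb{R}^{\mathscr{C}}$ by $\mu_S=\lambda^{\mathscr{C}^1}_S$ if $S\in\mathscr{C}^1$ and $\mu_S=0$ otherwise, and $\nu_S=\lambda^{\mathscr{C}^2}_S$ if $S\in\mathscr{C}^2$ and $\nu_S=0$ otherwise. Let $I\subseteq[k]$ be such that $\mu_I\neq\nu_I$ (where $\mu_I=\sum_{i\in I}\mu_{S_i}$, similarly $\nu_I$) and $$t^I=\frac{1-\mu_I}{\nu_I-\mu_I}\in\,]0,1[.$$ Then $\mathscr{C}'=\{S_i\cup\{p\}\mid i\in I\}\cup\{S_i\mid i\in[k]\setminus I\}$ is a minimal balanced collection on $N'$, with balancing weights $(1-t^I)\mu_{S_i}+t^I\nu_{S_i}$ for the set coming from $S_i$.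
   Context: For $T\subseteq N$, $\mathbf{1}^T\in\mathbb{R}^N$ denotes the characteristic vector of $T$; $n=|N|$. A collection $\mathscr{B}$ of nonempty subsets of a finite set $N$ is balanced if there exist positive weights $(\lambda_S)_{S\in\mathscr{B}}$ (balancing weights) with $\sum_{S\in\mathscr{B}}\lambda_S\mathbf{1}^S=\mathbf{1}^N$. A balanced collection is minimal if it contains no balanced proper subcollection; equivalently, its system of balancing weights is unique. $[k]=\{1,\dots,k\}$. *)

theory Defs
  imports "HOL-Analysis.Analysis"
begin

definition balancing_weights :: "'a set \<Rightarrow> 'a set set \<Rightarrow> ('a set \<Rightarrow> real) \<Rightarrow> bool" where
  "balancing_weights N B lam \<longleftrightarrow>
     (\<forall>S\<in>B. lam S > 0) \<and> (\<forall>i\<in>N. (\<Sum>S\<in>B. if i \<in> S then lam S else 0) = 1)"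

definition balanced :: "'a set \<Rightarrow> 'a set set \<Rightarrow> bool" where
  "balanced N B \<longleftrightarrow> finite B \<and> (\<forall>S\<in>B. S \<noteq> {} \<and> S \<subseteq> N) \<and> (\<exists>lam. balancing_weights N B lam)"

definition minimal_balanced :: "'a set \<Rightarrow> 'a set set \<Rightarrow> bool" where
  "minimal_balanced N B \<longleftrightarrow> balanced N B \<and> (\<forall>B'. B' \<subset> B \<longrightarrow> \<not> balanced N B')"

definition charvec :: "'a::finite set \<Rightarrow> real^'a" where
  "charvec T = (\<chi> i. if i \<in> T then 1 else 0)"

end

theory Submission
  imports Defs
begin

lemma charvec_inj: "charvec A = charvec B \<Longrightarrow> A = B"
  unfolding charvec_def by (auto simp: vec_eq_iff split: if_splits)

lemma kernel_lemma:
  fixes V :: "'a::finite set set" and a b :: "'a set \<Rightarrow> real"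
  assumes fin: "finite V" and T0: "T0 \<in> V"
    and dimV: "dim (charvec ` V) = card V - 1"
    and b0: "(\<Sum>T\<in>V. b T *\<^sub>R charvec T) = 0" and bT0: "b T0 \<noteq> 0"
    and a0: "(\<Sum>T\<in>V. a T *\<^sub>R charvec T) = 0"
    and T: "T \<in> V"
  shows "a T = (a T0 / b T0) * b T"
proof -
  have inj: "inj_on charvec (X::'a set set)" for X by (meson charvec_inj inj_onI)
  define W where "W = charvec ` (V - {T0})"
  have finW: "finite W" using fin W_def by auto
  have cardW: "card W = card V - 1"
    unfolding W_def by (simp add: card_image[OF inj] card_Diff_singleton fin T0)
  have split: "(\<Sum>T\<in>V. f T) = f T0 + (\<Sum>T\<in>V-{T0}. f T)" for f :: "'a set \<Rightarrow> real^'a"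
    using fin T0 by (simp add: sum.remove)
  have eq1: "b T0 *\<^sub>R charvec T0 = - (\<Sum>T\<in>V-{T0}. b T *\<^sub>R charvec T)"
    using b0 split[of "\<lambda>T. b T *\<^sub>R charvec T"] by (simp add: add_eq_0_iff)
  have "charvec T0 = (\<Sum>T\<in>V-{T0}. (- b T / b T0) *\<^sub>R charvec T)"
  proof -
    have "charvec T0 = (1 / b T0) *\<^sub>R (b T0 *\<^sub>R charvec T0)" using bT0 by simp
    also have "\<dots> = (1 / b T0) *\<^sub>R (- (\<Sum>T\<in>V-{T0}. b T *\<^sub>R charvec T))" using eq1 by simp
    also have "\<dots> = (\<Sum>T\<in>V-{T0}. (- b T / b T0) *\<^sub>R charvec T)"
      by (simp add: scaleR_sum_right sum_negf[symmetric])
    finally show ?thesis .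
  qed
  moreover have "(\<Sum>T\<in>V-{T0}. (- b T / b T0) *\<^sub>R charvec T) \<in> span W"
    by (intro span_sum span_scale span_base) (auto simp: W_def)
  ultimately have "charvec T0 \<in> span W" by simp
  hence "span (charvec ` V) = span W"
    unfolding W_def using T0
    by (metis image_insert insert_Diff span_redundant)
  hence "dim W = card W" using dimV cardW by (metis dim_span)
  hence indW: "independent W" using card_eq_dim[of W W] finW by (simp add: span_superset)
  define c where "c T = a T - (a T0 / b T0) * b T" for T
  have c0: "c T0 = 0" using bT0 c_def by simp
  have "(\<Sum>T\<in>V. c T *\<^sub>R charvec T) = 0"
  proof -
    have "(\<Sum>T\<in>V. ((a T0 / b T0) * b T) *\<^sub>R charvec T) = (a T0 / b T0) *\<^sub>R (\<Sum>T\<in>V. b T *\<^sub>R charvec T)"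
      by (simp add: scaleR_sum_right)
    thus ?thesis unfolding c_def by (simp add: scaleR_diff_left sum_subtractf a0 b0)
  qed
  hence "(\<Sum>T\<in>V-{T0}. c T *\<^sub>R charvec T) = 0"
    using split[of "\<lambda>T. c T *\<^sub>R charvec T"] c0 by simp
  hence "(\<Sum>v\<in>W. c (inv_into (V-{T0}) charvec v) *\<^sub>R v) = 0"
    unfolding W_def by (subst sum.reindex[OF inj]) (simp add: inv_into_f_f[OF inj])
  hence "\<forall>v\<in>W. c (inv_into (V-{T0}) charvec v) = 0"
    using indW unfolding independent_explicit
    by (elim conjE allE[where x="\<lambda>v. c (inv_into (V-{T0}) charvec v)"]) simp
  hence "c T = 0"
  proof (cases "T = T0")
    case False
    then have "charvec T \<in> W" using T W_def by auto
    then show ?thesis using \<open>\<forall>v\<in>W. _\<close> False T by (metis W_def \<open>charvec T \<in> W\<close> inv_into_f_f[OF inj] DiffI singletonD)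
  qed (use c0 in simp)
  thus ?thesis unfolding c_def by simp
qed
theorem lemma4p4:
  fixes N :: "'a::finite set" and p :: 'a
    and C1 C2 :: "'a set set" and lam1 lam2 :: "'a set \<Rightarrow> real"
    and k :: nat and S :: "nat \<Rightarrow> 'a set" and I :: "nat set"
  assumes "N \<noteq> {}" and "p \<notin> N"
    and "minimal_balanced N C1" and "minimal_balanced N C2" and "C1 \<noteq> C2"
    and "balancing_weights N C1 lam1" and "balancing_weights N C2 lam2"
    and "bij_betw S {1..k} (C1 \<union> C2)"
    and "dim (charvec ` (C1 \<union> C2)) = k - 1"
    and "I \<subseteq> {1..k}"
    and "(\<Sum>i\<in>I. (if S i \<in> C1 then lam1 (S i) else 0)) \<noteq> (\<Sum>i\<in>I. (if S i \<in> C2 then lam2 (S i) else 0))"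
    and "0 < (1 - (\<Sum>i\<in>I. (if S i \<in> C1 then lam1 (S i) else 0))) /
              ((\<Sum>i\<in>I. (if S i \<in> C2 then lam2 (S i) else 0)) - (\<Sum>i\<in>I. (if S i \<in> C1 then lam1 (S i) else 0)))"
    and "(1 - (\<Sum>i\<in>I. (if S i \<in> C1 then lam1 (S i) else 0))) /
              ((\<Sum>i\<in>I. (if S i \<in> C2 then lam2 (S i) else 0)) - (\<Sum>i\<in>I. (if S i \<in> C1 then lam1 (S i) else 0))) < 1"
  shows "let mu = (\<lambda>T. if T \<in> C1 then lam1 T else 0);
             nu = (\<lambda>T. if T \<in> C2 then lam2 T else 0);
             muI = (\<Sum>i\<in>I. mu (S i)); nuI = (\<Sum>i\<in>I. nu (S i));
             t = (1 - muI) / (nuI - muI);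
             C' = (\<lambda>i. insert p (S i)) ` I \<union> S ` ({1..k} - I)
         in minimal_balanced (insert p N) C' \<and>
            (\<forall>w. (\<forall>i\<in>{1..k}. w (if i \<in> I then insert p (S i) else S i) = (1 - t) * mu (S i) + t * nu (S i))
                 \<longrightarrow> balancing_weights (insert p N) C' w)"
  proof -
  define C where "C = C1 \<union> C2"
  define mu where "mu = (\<lambda>T. if T \<in> C1 then lam1 T else 0)"
  define nu where "nu = (\<lambda>T. if T \<in> C2 then lam2 T else 0)"
  define muI where "muI = (\<Sum>i\<in>I. mu (S i))"
  define nuI where "nuI = (\<Sum>i\<in>I. nu (S i))"
  define t where "t = (1 - muI) / (nuI - muI)"
  define C' where "C' = (\<lambda>i. insert p (S i)) ` I \<union> S ` ({1..k} - I)"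
  define SI where "SI = S ` I"
  define f where "f = (\<lambda>T. if T \<in> SI then insert p T else T)"
  define W where "W = (\<lambda>T. (1 - t) * mu T + t * nu T)"
  have bij: "bij_betw S {1..k} C" using assms(8) C_def by simp
  have finC: "finite C" using bij_betw_finite[OF bij] by simp
  have cardC: "card C = k" using bij_betw_same_card[OF bij] by simp
  have injS: "inj_on S {1..k}" using bij unfolding bij_betw_def by blast
  have SC: "S ` {1..k} = C" using bij unfolding bij_betw_def by blast
  have bal1: "balanced N C1" and bal2: "balanced N C2"
    using assms(3,4) minimal_balanced_def by auto
  have subN: "\<forall>T\<in>C. T \<subseteq> N \<and> T \<noteq> {}"
    using bal1 bal2 unfolding balanced_def C_def by blast
  have SIC: "SI \<subseteq> C" using SC assms(10) SI_def by auto
  have SIdiff: "S ` ({1..k} - I) = C - SI"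
    unfolding SI_def using injS SC assms(10) by (auto simp: inj_on_image_set_diff)
  have injI: "inj_on S I" using injS assms(10) inj_on_subset by blast
  have muI': "muI = (\<Sum>T\<in>SI. mu T)" unfolding muI_def SI_def by (simp add: sum.reindex[OF injI])
  have nuI': "nuI = (\<Sum>T\<in>SI. nu T)" unfolding nuI_def SI_def by (simp add: sum.reindex[OF injI])
  have neq: "muI \<noteq> nuI" using assms(11) unfolding muI_def nuI_def mu_def nu_def by simp
  have t0: "0 < t" and t1: "t < 1"
    using assms(12,13) unfolding t_def muI_def nuI_def mu_def nu_def by simp_all
  have tI: "(1 - t) * muI + t * nuI = 1"
  proof -
    have "nuI - muI \<noteq> 0" using neq by simp
    hence "t * (nuI - muI) = 1 - muI" unfolding t_def by simp
    thus ?thesis by (simp add: algebra_simps)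
  qed
  have C'f: "C' = f ` C"
  proof -
    have "(\<lambda>i. insert p (S i)) ` I = f ` SI" unfolding f_def SI_def by (auto simp: image_image)
    moreover have "S ` ({1..k} - I) = f ` (C - SI)" unfolding SIdiff f_def by auto
    ultimately show ?thesis unfolding C'_def using SIC by (simp add: image_Un[symmetric] Un_absorb1)
  qed
  have injf: "inj_on f C"
  proof (rule inj_onI)
    fix A B assume A: "A \<in> C" and B: "B \<in> C" and e: "f A = f B"
    have pA: "p \<notin> A" and pB: "p \<notin> B" using subN A B assms(2) by auto
    show "A = B"
    proof (cases "A \<in> SI"; cases "B \<in> SI")
      assume "A \<in> SI" "B \<in> SI" thus ?thesis using e pA pB unfolding f_def
         using insert_ident[OF pA pB] by simp
    next
      assume "A \<in> SI" "B \<notin> SI" thus ?thesis using e pB unfolding f_def by auto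
    next
      assume "A \<notin> SI" "B \<in> SI" thus ?thesis using e pA unfolding f_def by auto
    next
      assume "A \<notin> SI" "B \<notin> SI" thus ?thesis using e unfolding f_def by auto
    qed
  qed
  have memf: "j \<in> f T \<longleftrightarrow> (if j = p then T \<in> SI else j \<in> T)" if "T \<in> C" "j \<in> insert p N" for j T
    using that subN assms(2) unfolding f_def by auto
  have col1: "(\<Sum>T\<in>C. if j \<in> T then mu T else 0) = 1" if "j \<in> N" for j
  proof -
    have "(\<Sum>T\<in>C. if j \<in> T then mu T else 0) = (\<Sum>T\<in>C1. if j \<in> T then mu T else 0)"
      by (rule sum.mono_neutral_right) (use finC in \<open>auto simp: C_def mu_def\<close>)
    also have "\<dots> = (\<Sum>T\<in>C1. if j \<in> T then lam1 T else 0)"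
      by (rule sum.cong) (auto simp: mu_def)
    also have "\<dots> = 1" using assms(6) that unfolding balancing_weights_def by blast
    finally show ?thesis .
  qed
  have col2: "(\<Sum>T\<in>C. if j \<in> T then nu T else 0) = 1" if "j \<in> N" for j
  proof -
    have "(\<Sum>T\<in>C. if j \<in> T then nu T else 0) = (\<Sum>T\<in>C2. if j \<in> T then nu T else 0)"
      by (rule sum.mono_neutral_right) (use finC in \<open>auto simp: C_def nu_def\<close>)
    also have "\<dots> = (\<Sum>T\<in>C2. if j \<in> T then lam2 T else 0)"
      by (rule sum.cong) (auto simp: nu_def)
    also have "\<dots> = 1" using assms(7) that unfolding balancing_weights_def by blast
    finally show ?thesis .
  qed
  have Wpos: "W T > 0" if "T \<in> C" for T
  proof -
    have l1: "T \<in> C1 \<Longrightarrow> lam1 T > 0" using assms(6) unfolding balancing_weights_def by blast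
    have l2: "T \<in> C2 \<Longrightarrow> lam2 T > 0" using assms(7) unfolding balancing_weights_def by blast
    have "T \<in> C1 \<or> T \<in> C2" using that C_def by auto
    moreover have "0 \<le> mu T" "0 \<le> nu T" using l1 l2 unfolding mu_def nu_def by (auto intro: less_imp_le)
    moreover have "0 < (1 - t) * mu T" if "T \<in> C1" using that l1 t1 unfolding mu_def by simp
    moreover have "0 < t * nu T" if "T \<in> C2" using that l2 t0 unfolding nu_def by simp
    moreover have "0 \<le> (1 - t) * mu T" "0 \<le> t * nu T"
      using \<open>0 \<le> mu T\<close> \<open>0 \<le> nu T\<close> t0 t1 by simp_all
    ultimately show ?thesis unfolding W_def by linarith
  qed
  have part1: "balancing_weights (insert p N) C' w" if hw: "\<forall>T\<in>C. w (f T) = W T" for w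
    unfolding balancing_weights_def
  proof (intro conjI ballI)
    fix U assume "U \<in> C'" then obtain T where "T \<in> C" "U = f T" using C'f by auto
    thus "0 < w U" using hw Wpos by auto
  next
    fix j assume j: "j \<in> insert p N"
    have "(\<Sum>U\<in>C'. if j \<in> U then w U else 0) = (\<Sum>T\<in>C. if j \<in> f T then W T else 0)"
      unfolding C'f sum.reindex[OF injf] o_def using hw by (intro sum.cong) auto
    also have "\<dots> = 1"
    proof (cases "j = p")
      case True
      have "(\<Sum>T\<in>C. if j \<in> f T then W T else 0) = (\<Sum>T\<in>C. if T \<in> SI then W T else 0)"
        by (rule sum.cong) (use memf j True in auto)
      also have "\<dots> = (\<Sum>T\<in>SI. W T)" using SIC finC by (simp add: sum.If_cases Int_absorb1)
      also have "\<dots> = (1 - t) * muI + t * nuI"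
        unfolding W_def muI' nuI' by (simp add: sum.distrib sum_distrib_left)
      finally show ?thesis using tI by simp
    next
      case False
      hence jN: "j \<in> N" using j by simp
      have "(\<Sum>T\<in>C. if j \<in> f T then W T else 0) = (\<Sum>T\<in>C. (1 - t) * (if j \<in> T then mu T else 0) + t * (if j \<in> T then nu T else 0))"
        by (rule sum.cong) (use memf j False in \<open>auto simp: W_def\<close>)
      also have "\<dots> = (1 - t) + t"
        by (simp add: sum.distrib sum_distrib_left[symmetric] col1[OF jN] col2[OF jN])
      finally show ?thesis by simp
    qed
    finally show "(\<Sum>U\<in>C'. if j \<in> U then w U else 0) = 1" .
  qed
  have balC': "balanced (insert p N) C'"
    unfolding balanced_def
  proof (intro conjI)
    show "finite C'" using C'f finC by simp
    show "\<forall>S\<in>C'. S \<noteq> {} \<and> S \<subseteq> insert p N" using C'f subN unfolding f_def by auto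
    let ?w = "\<lambda>U. W (inv_into C f U)"
    have "\<forall>T\<in>C. ?w (f T) = W T" using inv_into_f_f[OF injf] by simp
    thus "\<exists>lam. balancing_weights (insert p N) C' lam" by (intro exI[of _ ?w] part1)
  qed
  have minimal: "\<not> balanced (insert p N) B'" if "B' \<subset> C'" for B'
  proof
    assume "balanced (insert p N) B'"
    then obtain v where v: "balancing_weights (insert p N) B' v" and finB: "finite B'"
      unfolding balanced_def by blast
    define x where "x = (\<lambda>T. if f T \<in> B' then v (f T) else 0)"
    have colx: "(\<Sum>T\<in>C. if j \<in> f T then x T else 0) = 1" if j: "j \<in> insert p N" for j
    proof -
      have "(\<Sum>T\<in>C. if j \<in> f T then x T else 0) = (\<Sum>U\<in>f ` C. if j \<in> U then (if U \<in> B' then v U else 0) else 0)"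
        unfolding x_def sum.reindex[OF injf] o_def by simp
      also have "\<dots> = (\<Sum>U\<in>B'. if j \<in> U then (if U \<in> B' then v U else 0) else 0)"
        by (rule sum.mono_neutral_right) (use finC \<open>B' \<subset> C'\<close> C'f in auto)
      also have "\<dots> = (\<Sum>U\<in>B'. if j \<in> U then v U else 0)" by (rule sum.cong) auto
      also have "\<dots> = 1" using v j unfolding balancing_weights_def by blast
      finally show ?thesis .
    qed
    have xN: "(\<Sum>T\<in>C. if j \<in> T then x T else 0) = 1" if "j \<in> N" for j
    proof -
      have "j \<noteq> p" using that assms(2) by auto
      hence "(\<Sum>T\<in>C. if j \<in> T then x T else 0) = (\<Sum>T\<in>C. if j \<in> f T then x T else 0)"
        using memf[OF _ insertI2[OF that]] \<open>j \<noteq> p\<close> by (intro sum.cong) auto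
      thus ?thesis using colx that by simp
    qed
    have xp: "(\<Sum>T\<in>SI. x T) = 1"
    proof -
      have "(\<Sum>T\<in>SI. x T) = (\<Sum>T\<in>C. if T \<in> SI then x T else 0)"
        using SIC finC by (simp add: sum.If_cases Int_absorb1)
      also have "\<dots> = (\<Sum>T\<in>C. if p \<in> f T then x T else 0)"
        using memf[OF _ insertI1] by (intro sum.cong) auto
      finally show ?thesis using colx by simp
    qed
    have vec0: "(\<Sum>T\<in>C. (g T - mu T) *\<^sub>R charvec T) = 0"
      if hg: "\<And>j. j \<in> N \<Longrightarrow> (\<Sum>T\<in>C. if j \<in> T then g T else 0) = 1" for g
    proof (subst vec_eq_iff, intro allI)
      fix j
      have "(\<Sum>T\<in>C. (g T - mu T) *\<^sub>R charvec T) $ j = (\<Sum>T\<in>C. (if j \<in> T then g T else 0) - (if j \<in> T then mu T else 0))"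
        unfolding sum_component by (intro sum.cong) (auto simp: charvec_def)
      also have "\<dots> = 0"
      proof (cases "j \<in> N")
        case True thus ?thesis using hg col1 by (simp add: sum_subtractf)
      next
        case False
        hence "\<forall>T\<in>C. j \<notin> T" using subN by auto
        thus ?thesis by simp
      qed
      finally show "(\<Sum>T\<in>C. (g T - mu T) *\<^sub>R charvec T) $ j = 0 $ j" by simp
    qed
    have a0: "(\<Sum>T\<in>C. (x T - mu T) *\<^sub>R charvec T) = 0" using vec0 xN by blast
    have b0: "(\<Sum>T\<in>C. (nu T - mu T) *\<^sub>R charvec T) = 0" using vec0 col2 by blast
    obtain T0 where T0: "T0 \<in> C" "nu T0 - mu T0 \<noteq> 0"
    proof -
      obtain T where "T \<in> C1 - C2 \<or> T \<in> C2 - C1" using assms(5) by blast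
      moreover have "T \<in> C1 \<Longrightarrow> lam1 T > 0" using assms(6) unfolding balancing_weights_def by blast
      moreover have "T \<in> C2 \<Longrightarrow> lam2 T > 0" using assms(7) unfolding balancing_weights_def by blast
      ultimately have "T \<in> C" "nu T - mu T \<noteq> 0" unfolding C_def mu_def nu_def by auto
      thus ?thesis using that by blast
    qed
    have dimC: "dim (charvec ` C) = card C - 1" using assms(9) cardC C_def by simp
    define s where "s = (x T0 - mu T0) / (nu T0 - mu T0)"
    have xs: "x T = mu T + s * (nu T - mu T)" if "T \<in> C" for T
      using kernel_lemma[OF finC T0(1) dimC b0 T0(2) a0 that] unfolding s_def by simp
    have "1 = (\<Sum>T\<in>SI. mu T + s * (nu T - mu T))" using xp xs SIC by (metis (no_types, lifting) subsetD sum.cong)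
    also have "\<dots> = muI + s * (nuI - muI)"
      unfolding muI' nuI' by (simp add: sum.distrib sum_distrib_left sum_subtractf algebra_simps)
    finally have "s * (nuI - muI) = 1 - muI" by simp
    hence st: "s = t" unfolding t_def using neq by (simp add: field_simps)
    have "f T \<in> B'" if "T \<in> C" for T
    proof (rule ccontr)
      assume "f T \<notin> B'"
      hence "x T = 0" unfolding x_def by simp
      moreover have "x T = W T" using xs[OF that] st unfolding W_def by (simp add: algebra_simps)
      ultimately show False using Wpos[OF that] by simp
    qed
    hence "C' \<subseteq> B'" using C'f by auto
    thus False using \<open>B' \<subset> C'\<close> by auto
  qed
  have main: "minimal_balanced (insert p N) C' \<and>
            (\<forall>w. (\<forall>i\<in>{1..k}. w (if i \<in> I then insert p (S i) else S i) = (1 - t) * mu (S i) + t * nu (S i))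
                 \<longrightarrow> balancing_weights (insert p N) C' w)"
  proof (intro conjI allI impI)
    show "minimal_balanced (insert p N) C'" unfolding minimal_balanced_def using balC' minimal by blast
  next
    fix w assume hw: "\<forall>i\<in>{1..k}. w (if i \<in> I then insert p (S i) else S i) = (1 - t) * mu (S i) + t * nu (S i)"
    have "\<forall>T\<in>C. w (f T) = W T"
    proof
      fix T assume "T \<in> C"
      then obtain i where i: "i \<in> {1..k}" "T = S i" using SC by auto
      have "S i \<in> SI \<longleftrightarrow> i \<in> I" unfolding SI_def using injS i(1) assms(10)
        by (auto dest: inj_onD)
      hence "f T = (if i \<in> I then insert p (S i) else S i)" unfolding f_def i(2) by simp
      thus "w (f T) = W T" using hw i unfolding W_def by simp
    qed
    thus "balancing_weights (insert p N) C' w" using part1 by blast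
  qed
  show ?thesis unfolding Let_def
    using main unfolding mu_def nu_def muI_def nuI_def t_def C'_def .
qed

end
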